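(* Let $(x_1,\dots,x_{r+1})$ be a nonbacktracking walk in an undirected graph without loops. Then for every repeating edge block, with first node at position $a$: (i) $x_a=x_j$ for some $j<a$ (equivalently, in the notation of Lemma 4, the list $\mathbf R_2$ of repeating edge blocks whose first-node vertex has not appeared earlier in the walk is empty); and (ii) either $x_a=x_1$ or $x_a=x_j$ for some position $j$ in the new edge interior.
   Context: A walk of length $r$ is a sequence $(x_1,\dots,x_{r+1})$ of vertices with each $\{x_i,x_{i+1}\}$ an edge; it is nonbacktracking if $x_i\neq x_{i+2}$ for all $i\in\{1,\dots,r-1\}$. The $i$-th edge $\{x_i,x_{i+1}\}$ is a new edge if it differs from $\{x_j,x_{j+1}\}$ for all $j<i$, and a repeating edge otherwise. A repeating edge block is a maximal run of consecutive repeating edges, say edges $a,\dots,b-1$ ($a<b$); its first node is position $a$ and its last node is position $b$. The new edge interior is the list of positions $m$ with $2\le m\le r$ such that both the $(m-1)$-th and $m$-th edges are new. *)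

theory Defs
  imports Main
begin

text \<open>A walk of length r is given by a function x on positions 1..r+1 (1-based).
  The i-th edge (1 <= i <= r) is the unordered pair {x i, x (i+1)}.\<close>

definition walk_edge :: "(nat \<Rightarrow> 'a) \<Rightarrow> nat \<Rightarrow> 'a set" where
  "walk_edge x i = {x i, x (Suc i)}"

definition is_walk :: "('a \<Rightarrow> 'a \<Rightarrow> bool) \<Rightarrow> (nat \<Rightarrow> 'a) \<Rightarrow> nat \<Rightarrow> bool" where
  "is_walk E x r \<longleftrightarrow> (\<forall>i. 1 \<le> i \<and> i \<le> r \<longrightarrow> E (x i) (x (Suc i)))"

definition nonbacktracking :: "(nat \<Rightarrow> 'a) \<Rightarrow> nat \<Rightarrow> bool" where
  "nonbacktracking x r \<longleftrightarrow> (\<forall>i. 1 \<le> i \<and> i \<le> r - 1 \<longrightarrow> x i \<noteq> x (i + 2))"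

definition new_edge :: "(nat \<Rightarrow> 'a) \<Rightarrow> nat \<Rightarrow> bool" where
  "new_edge x i \<longleftrightarrow> (\<forall>j. 1 \<le> j \<and> j < i \<longrightarrow> walk_edge x j \<noteq> walk_edge x i)"

definition repeating_edge :: "(nat \<Rightarrow> 'a) \<Rightarrow> nat \<Rightarrow> bool" where
  "repeating_edge x i \<longleftrightarrow> \<not> new_edge x i"

text \<open>Repeating edge block: maximal run of repeating edges a, ..., b-1 with a < b;
  its first node is position a and its last node is position b.\<close>
definition repeating_block :: "(nat \<Rightarrow> 'a) \<Rightarrow> nat \<Rightarrow> nat \<Rightarrow> nat \<Rightarrow> bool" where
  "repeating_block x r a b \<longleftrightarrow>
     1 \<le> a \<and> a < b \<and> b \<le> r + 1 \<and>
     (\<forall>i. a \<le> i \<and> i < b \<longrightarrow> repeating_edge x i) \<and>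
     (a = 1 \<or> new_edge x (a - 1)) \<and>
     (b = r + 1 \<or> new_edge x b)"

definition new_edge_interior :: "(nat \<Rightarrow> 'a) \<Rightarrow> nat \<Rightarrow> nat set" where
  "new_edge_interior x r = {m. 2 \<le> m \<and> m \<le> r \<and> new_edge x (m - 1) \<and> new_edge x m}"

end

theory Submission
  imports Defs
begin

theorem lemma5:
  fixes E :: "'a \<Rightarrow> 'a \<Rightarrow> bool" and x :: "nat \<Rightarrow> 'a" and r a b :: nat
  assumes sym: "\<And>u v. E u v \<Longrightarrow> E v u"
    and noloop: "\<And>u. \<not> E u u"
    and walk: "is_walk E x r"
    and nb: "nonbacktracking x r"
    and blk: "repeating_block x r a b"
  shows "(\<exists>j. 1 \<le> j \<and> j < a \<and> x a = x j) \<and>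
         (x a = x 1 \<or> (\<exists>m \<in> new_edge_interior x r. x a = x m))"
proof -
  have ar: "a \<le> r" and a1: "1 \<le> a" and rep: "repeating_edge x a"
    using blk unfolding repeating_block_def by auto
  have nl: "x i \<noteq> x (Suc i)" if "1 \<le> i" "i \<le> r" for i
    using walk noloop that unfolding is_walk_def by metis
  have nbi: "x i \<noteq> x (i+2)" if "1 \<le> i" "i \<le> r - 1" for i
    using nb that unfolding nonbacktracking_def by blast
  obtain j where j: "1 \<le> j" "j < a" "walk_edge x j = walk_edge x a"
    using rep unfolding repeating_edge_def new_edge_def by auto
  have P1: "\<exists>j. 1 \<le> j \<and> j < a \<and> x a = x j"
  proof (cases "x a = x j")
    case True then show ?thesis using j by blast
  next
    case False
    then have xa: "x a = x (Suc j)" using j(3) unfolding walk_edge_def by (auto simp: doubleton_eq_iff)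
    show ?thesis
    proof (cases "Suc j < a")
      case True then show ?thesis using xa j by auto
    next
      case False
      then have aj: "a = Suc j" using j by auto
      have "x j \<noteq> x a" using nl[of j] j ar aj by auto
      then have "x j = x (Suc a)" using j(3) aj unfolding walk_edge_def by (auto simp: doubleton_eq_iff)
      moreover have "x j \<noteq> x (j+2)" using nbi[of j] j ar aj by auto
      ultimately show ?thesis using aj by auto
    qed
  qed
  define j0 where "j0 = (LEAST k. 1 \<le> k \<and> x k = x a)"
  obtain k where k: "1 \<le> k" "k < a" "x a = x k" using P1 by blast
  have j0p: "1 \<le> j0 \<and> x j0 = x a" unfolding j0_def
    by (rule LeastI[of _ k]) (use k in auto)
  have j0le: "j0 \<le> k" unfolding j0_def by (rule Least_le) (use k in auto)
  have j0min: "\<And>i. 1 \<le> i \<Longrightarrow> i < j0 \<Longrightarrow> x i \<noteq> x a"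
    unfolding j0_def using not_less_Least by blast
  have P2: "x a = x 1 \<or> (\<exists>m \<in> new_edge_interior x r. x a = x m)"
  proof (cases "j0 = 1")
    case True then show ?thesis using j0p by auto
  next
    case False
    then have j2: "2 \<le> j0" using j0p by auto
    have jr: "j0 \<le> r" "j0 < a" using j0le k ar by auto
    have n1: "new_edge x (j0 - 1)"
      unfolding new_edge_def walk_edge_def
    proof (intro allI impI)
      fix i assume i: "1 \<le> i \<and> i < j0 - 1"
      have "x i \<noteq> x a" "x (Suc i) \<noteq> x a" using j0min i by auto
      moreover have "Suc (j0 - 1) = j0" using j2 by auto
      ultimately show "{x i, x (Suc i)} \<noteq> {x (j0 - 1), x (Suc (j0 - 1))}"
        using j0p by (auto simp: doubleton_eq_iff)
    qed
    have n2: "new_edge x j0"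
      unfolding new_edge_def walk_edge_def
    proof (intro allI impI)
      fix i assume i: "1 \<le> i \<and> i < j0"
      show "{x i, x (Suc i)} \<noteq> {x j0, x (Suc j0)}"
      proof (cases "Suc i = j0")
        case True
        have "x i \<noteq> x j0" using nl[of i] i True jr by auto
        moreover have "x i \<noteq> x (i+2)" using nbi[of i] i True jr by auto
        ultimately show ?thesis using True by (auto simp: doubleton_eq_iff)
      next
        case False
        have "x i \<noteq> x a" "x (Suc i) \<noteq> x a" using j0min i False by auto
        then show ?thesis using j0p by (auto simp: doubleton_eq_iff)
      qed
    qed
    have "j0 \<in> new_edge_interior x r"
      unfolding new_edge_interior_def using j2 jr n1 n2 by auto
    then show ?thesis using j0p by metis
  qed
  show ?thesis using P1 P2 by blast
qed

end
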